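(* Let $G$ be a graph, let $\langle \mathcal{P}, T\rangle$ be a VPT representation of $G$, let $C$ be a clique of $G$ and let $q\in V(T)$ with $C=C_q$. If $d_T(q)=h$, then the branch graph $B(G/C)$ is $h$-colorable.
   Context: All graphs are finite, simple and connected. A clique is a maximal complete set of vertices. A VPT representation $\langle \mathcal{P},T\rangle$ of a graph $G$ is a family $\mathcal{P}=(P_v)_{v\in V(G)}$ of subpaths of a tree $T$ such that two distinct vertices $v,v'$ of $G$ are adjacent iff $P_v$ and $P_{v'}$ share at least one vertex. For $q\in V(T)$, $C_q=\{v\in V(G): q\in V(P_v)\}$. For a clique $C$ of $G$, the branch graph $B(G/C)$ has vertex set the vertices of $V(G)\setminus C$ adjacent to some vertex of $C$, and two such vertices $v,w$ are adjacent in $B(G/C)$ iff (1) $vw\notin E(G)$; (2) some vertex of $C$ is adjacent to both $v$ and $w$; and (3) there exist $v',w'\in C$ with $v'$ adjacent to $v$ but not to $w$, and $w'$ adjacent to $w$ but not to $v$. A graph is $k$-colorable if its vertices can be colored with at most $k$ colors so that adjacent vertices get different colors. *)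

theory Defs
  imports Main
begin

definition simple_graph :: "'a set \<Rightarrow> ('a \<Rightarrow> 'a \<Rightarrow> bool) \<Rightarrow> bool" where
  "simple_graph V E \<longleftrightarrow>
     (\<forall>x y. E x y \<longrightarrow> x \<in> V \<and> y \<in> V) \<and>
     (\<forall>x y. E x y \<longrightarrow> E y x) \<and>
     (\<forall>x. \<not> E x x)"

definition connected_graph :: "'a set \<Rightarrow> ('a \<Rightarrow> 'a \<Rightarrow> bool) \<Rightarrow> bool" where
  "connected_graph V E \<longleftrightarrow> V \<noteq> {} \<and>
     (\<forall>x\<in>V. \<forall>y\<in>V. (\<lambda>u w. u \<in> V \<and> w \<in> V \<and> E u w)\<^sup>*\<^sup>* x y)"

definition fin_conn_graph :: "'a set \<Rightarrow> ('a \<Rightarrow> 'a \<Rightarrow> bool) \<Rightarrow> bool" where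
  "fin_conn_graph V E \<longleftrightarrow> finite V \<and> simple_graph V E \<and> connected_graph V E"

definition is_path :: "'b set \<Rightarrow> ('b \<Rightarrow> 'b \<Rightarrow> bool) \<Rightarrow> 'b list \<Rightarrow> bool" where
  "is_path VT ET ps \<longleftrightarrow> ps \<noteq> [] \<and> distinct ps \<and> set ps \<subseteq> VT \<and>
     (\<forall>i. Suc i < length ps \<longrightarrow> ET (ps ! i) (ps ! Suc i))"

definition is_cycle :: "'b set \<Rightarrow> ('b \<Rightarrow> 'b \<Rightarrow> bool) \<Rightarrow> 'b list \<Rightarrow> bool" where
  "is_cycle VT ET cs \<longleftrightarrow> length cs \<ge> 3 \<and> is_path VT ET cs \<and> ET (last cs) (hd cs)"

definition is_tree :: "'b set \<Rightarrow> ('b \<Rightarrow> 'b \<Rightarrow> bool) \<Rightarrow> bool" where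
  "is_tree VT ET \<longleftrightarrow> fin_conn_graph VT ET \<and> (\<nexists>cs. is_cycle VT ET cs)"

definition degree :: "'b set \<Rightarrow> ('b \<Rightarrow> 'b \<Rightarrow> bool) \<Rightarrow> 'b \<Rightarrow> nat" where
  "degree VT ET q = card {r \<in> VT. ET q r}"

definition VPT_rep :: "'a set \<Rightarrow> ('a \<Rightarrow> 'a \<Rightarrow> bool) \<Rightarrow> ('a \<Rightarrow> 'b list) \<Rightarrow>
    'b set \<Rightarrow> ('b \<Rightarrow> 'b \<Rightarrow> bool) \<Rightarrow> bool" where
  "VPT_rep V E P VT ET \<longleftrightarrow> is_tree VT ET \<and>
     (\<forall>v\<in>V. is_path VT ET (P v)) \<and>
     (\<forall>v\<in>V. \<forall>v'\<in>V. v \<noteq> v' \<longrightarrow> (E v v' \<longleftrightarrow> set (P v) \<inter> set (P v') \<noteq> {}))"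

definition Cq :: "'a set \<Rightarrow> ('a \<Rightarrow> 'b list) \<Rightarrow> 'b \<Rightarrow> 'a set" where
  "Cq V P q = {v \<in> V. q \<in> set (P v)}"

definition complete_set :: "'a set \<Rightarrow> ('a \<Rightarrow> 'a \<Rightarrow> bool) \<Rightarrow> 'a set \<Rightarrow> bool" where
  "complete_set V E K \<longleftrightarrow> K \<subseteq> V \<and> (\<forall>x\<in>K. \<forall>y\<in>K. x \<noteq> y \<longrightarrow> E x y)"

definition is_clique :: "'a set \<Rightarrow> ('a \<Rightarrow> 'a \<Rightarrow> bool) \<Rightarrow> 'a set \<Rightarrow> bool" where
  "is_clique V E C \<longleftrightarrow> complete_set V E C \<and>
     (\<forall>K. complete_set V E K \<and> C \<subseteq> K \<longrightarrow> K = C)"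

definition branch_vertices :: "'a set \<Rightarrow> ('a \<Rightarrow> 'a \<Rightarrow> bool) \<Rightarrow> 'a set \<Rightarrow> 'a set" where
  "branch_vertices V E C = {v \<in> V - C. \<exists>c\<in>C. E v c}"

definition branch_edge :: "'a set \<Rightarrow> ('a \<Rightarrow> 'a \<Rightarrow> bool) \<Rightarrow> 'a set \<Rightarrow> 'a \<Rightarrow> 'a \<Rightarrow> bool" where
  "branch_edge V E C v w \<longleftrightarrow>
     v \<in> branch_vertices V E C \<and> w \<in> branch_vertices V E C \<and>
     \<not> E v w \<and>
     (\<exists>c\<in>C. E c v \<and> E c w) \<and>
     (\<exists>v'\<in>C. \<exists>w'\<in>C. E v' v \<and> \<not> E v' w \<and> E w' w \<and> \<not> E w' v)"

definition k_colorable :: "'a set \<Rightarrow> ('a \<Rightarrow> 'a \<Rightarrow> bool) \<Rightarrow> nat \<Rightarrow> bool" where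
  "k_colorable V E k \<longleftrightarrow> (\<exists>f :: 'a \<Rightarrow> nat.
     (\<forall>v\<in>V. f v < k) \<and> (\<forall>v\<in>V. \<forall>w\<in>V. E v w \<longrightarrow> f v \<noteq> f w))"

end

theory Submission
  imports Defs
begin

lemma path_iff: "is_path VT ET ps \<longleftrightarrow> ps \<noteq> [] \<and> distinct ps \<and> set ps \<subseteq> VT \<and> successively ET ps"
  by (auto simp: is_path_def successively_conv_nth)

lemma succ_take: "successively R xs \<Longrightarrow> successively R (take n xs)"
  by (metis append_take_drop_id successively_append_iff)

lemma succ_drop: "successively R xs \<Longrightarrow> successively R (drop n xs)"
  by (metis append_take_drop_id successively_append_iff)

lemma path_rev:
  assumes S: "\<And>x y. ET x y \<Longrightarrow> ET y x" and p: "is_path VT ET ps"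
  shows "is_path VT ET (rev ps)"
proof -
  have "successively ET ps" using p by (simp add: path_iff)
  hence "successively (\<lambda>x y. ET y x) ps" by (rule successively_mono) (use S in auto)
  thus ?thesis using p by (simp add: path_iff)
qed

lemma path_seg:
  assumes p: "is_path VT ET ps" and ij: "i \<le> j" "j < length ps"
  shows "is_path VT ET (drop i (take (Suc j) ps)) \<and> hd (drop i (take (Suc j) ps)) = ps ! i
     \<and> last (drop i (take (Suc j) ps)) = ps ! j \<and> set (drop i (take (Suc j) ps)) \<subseteq> set ps"
proof -
  have s: "successively ET ps" "distinct ps" "set ps \<subseteq> VT" using p by (auto simp: path_iff)
  have st: "set (drop i (take (Suc j) ps)) \<subseteq> set ps"
    using set_drop_subset set_take_subset by (metis subset_trans)
  have ne: "drop i (take (Suc j) ps) \<noteq> []" using ij by simp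
  have "is_path VT ET (drop i (take (Suc j) ps))"
    unfolding path_iff using ne st s by (auto intro: succ_drop succ_take)
  moreover have "hd (drop i (take (Suc j) ps)) = ps ! i" using ij
    by (simp add: hd_drop_conv_nth)
  moreover have "last (drop i (take (Suc j) ps)) = ps ! j"
  proof -
    have "last (take (Suc j) ps) = ps ! j" using ij by (simp add: take_Suc_conv_app_nth)
    moreover have "i < length (take (Suc j) ps)" using ij by simp
    ultimately show ?thesis by simp
  qed
  ultimately show ?thesis using st by blast
qed

lemma sub_path:
  assumes S: "\<And>x y. ET x y \<Longrightarrow> ET y x" and p: "is_path VT ET ps"
    and x: "x \<in> set ps" and y: "y \<in> set ps"
  shows "\<exists>r. is_path VT ET r \<and> hd r = x \<and> last r = y \<and> set r \<subseteq> set ps"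
proof -
  obtain i j where i: "i < length ps" "ps ! i = x" and j: "j < length ps" "ps ! j = y"
    using x y by (auto simp: in_set_conv_nth)
  show ?thesis
  proof (cases "i \<le> j")
    case True thus ?thesis using path_seg[OF p True j(1)] i j by blast
  next
    case False
    hence ji: "j \<le> i" by simp
    let ?r = "drop j (take (Suc i) ps)"
    have r: "is_path VT ET ?r" "hd ?r = ps ! j" "last ?r = ps ! i" "set ?r \<subseteq> set ps"
      using path_seg[OF p ji i(1)] by auto
    have "is_path VT ET (rev ?r)" using path_rev[OF S r(1)] .
    moreover have "hd (rev ?r) = x" using r(3) i by (simp add: hd_rev)
    moreover have "last (rev ?r) = y" using r(2) j by (simp add: last_rev)
    moreover have "set (rev ?r) \<subseteq> set ps" using r(4) by simp
    ultimately show ?thesis by blast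
  qed
qed

lemma distinct_hd_last: "distinct xs \<Longrightarrow> xs = a # ys \<Longrightarrow> ys \<noteq> [] \<Longrightarrow> last xs \<noteq> a"
  by (metis distinct.simps(2) last.simps last_in_set)

lemma path_uniq:
  assumes S: "\<And>x y. ET x y \<Longrightarrow> ET y x" and NC: "\<nexists>cs. is_cycle VT ET cs"
  shows "is_path VT ET ps \<Longrightarrow> is_path VT ET qs \<Longrightarrow> hd ps = hd qs \<Longrightarrow> last ps = last qs \<Longrightarrow> ps = qs"
proof (induction ps arbitrary: qs)
  case Nil thus ?case by (simp add: path_iff)
next
  case (Cons a A)
  have pA: "distinct (a # A)" "set (a#A) \<subseteq> VT" "successively ET (a#A)"
    using Cons.prems by (auto simp: path_iff)
  obtain B where qsB: "qs = a # B" using Cons.prems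
    by (metis list.collapse list.sel(1) path_iff)
  have pB: "distinct (a # B)" "set (a#B) \<subseteq> VT" "successively ET (a#B)"
    using Cons.prems qsB by (auto simp: path_iff)
  show ?case
  proof (cases "A = []")
    case True
    hence "last qs = a" using Cons.prems(4) by simp
    hence "B = []" using distinct_hd_last[OF pB(1) refl] qsB by metis
    thus ?thesis using qsB True by simp
  next
    case Ane: False
    have Bne: "B \<noteq> []"
    proof
      assume "B = []"
      thus False using Cons.prems qsB distinct_hd_last[OF pA(1) refl Ane] by simp
    qed
    have lAB: "last A = last B" using Cons.prems qsB Ane Bne by simp
    have pathA: "is_path VT ET A" using pA Ane by (auto simp: path_iff successively_Cons)
    have pathB: "is_path VT ET B" using pB Bne by (auto simp: path_iff successively_Cons)
    show ?thesis
    proof (cases "hd A = hd B")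
      case True
      with Cons.IH[OF pathA pathB True lAB] qsB show ?thesis by simp
    next
      case hdne: False
      define m where "m = (LEAST m. m < length A \<and> A ! m \<in> set B)"
      have ex: "length A - 1 < length A \<and> A ! (length A - 1) \<in> set B"
        using Ane Bne lAB by (metis diff_less last_conv_nth last_in_set length_greater_0_conv zero_less_one)
      have m0: "m < length A \<and> A ! m \<in> set B" unfolding m_def by (rule LeastI[of _ "length A - 1"]) (rule ex)
      have m: "m < length A" "A ! m \<in> set B" using m0 by auto
      have mmin: "\<And>l. l < m \<Longrightarrow> A ! l \<notin> set B"
        using not_less_Least m_def m(1) by fastforce
      obtain n where n: "n < length B" "B ! n = A ! m" using m(2) by (auto simp: in_set_conv_nth)
      define cs where "cs = a # take (Suc m) A @ rev (take n B)"
      have mn: "m + n \<ge> 1"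
      proof (rule ccontr)
        assume "\<not> ?thesis" hence "m = 0" "n = 0" by auto
        thus False using n hdne Ane Bne by (simp add: hd_conv_nth)
      qed
      have len: "length cs \<ge> 3" using mn m n by (simp add: cs_def)
      have aA: "a \<notin> set A" and aB: "a \<notin> set B" using pA pB by auto
      have disj: "set (take (Suc m) A) \<inter> set (take n B) = {}"
      proof (rule ccontr)
        assume "\<not> ?thesis"
        then obtain x where x1: "x \<in> set (take (Suc m) A)" and x2: "x \<in> set (take n B)" by blast
        obtain l where l: "l < Suc m" "l < length A" "A ! l = x" using x1
          by (auto simp: in_set_conv_nth)
        obtain l' where l': "l' < n" "B ! l' = x" using x2
          by (auto simp: in_set_conv_nth)
        have "x \<in> set B" using x2 by (meson in_set_takeD)
        hence "l = m" using mmin l by (metis less_Suc_eq)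
        hence "B ! l' = B ! n" using l l' n by simp
        thus False using l' n pB(1) nth_eq_iff_index_eq[of B l' n] by auto
      qed
      have tA: "set (take (Suc m) A) \<subseteq> set A" by (rule set_take_subset)
      have tB: "set (take n B) \<subseteq> set B" by (rule set_take_subset)
      have dA: "distinct A" "distinct B" using pA pB by auto
      have dist: "distinct cs" unfolding cs_def using aA aB tA tB disj dA
        by (simp add: distinct_take) blast
      have sub: "set cs \<subseteq> VT" unfolding cs_def using pA pB tA tB by auto
      have sA: "successively ET A" and sB: "successively ET B"
        using pA pB by (auto simp: successively_Cons)
      have e1: "ET a (hd A)" and e2: "ET a (hd B)" using pA(3) pB(3) Ane Bne
        by (auto simp: successively_Cons)
      have lastA: "last (take (Suc m) A) = A ! m" using m path_seg[OF pathA, of 0 m] by simp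
      have sBr: "successively ET (rev (take n B))"
        using succ_take[OF sB, of n] by (simp, rule successively_mono) (use S in auto)
      have junc: "n > 0 \<Longrightarrow> ET (A ! m) (B ! (n - 1))"
        using successively_nth[OF sB, of "n - 1"] n S by simp
      have lastB: "n > 0 \<Longrightarrow> last (take n B) = B ! (n - 1)"
        using n path_seg[OF pathB, of 0 "n - 1"] by simp
      have hdA: "hd (take (Suc m) A) = hd A" using Ane by simp
      have s1: "successively ET (a # take (Suc m) A)"
        using e1 succ_take[OF sA, of "Suc m"] hdA Ane by (simp add: successively_Cons)
      have lastA': "last (a # take (Suc m) A) = A ! m" using lastA Ane by simp
      have succ: "successively ET cs"
      proof (cases "n = 0")
        case True thus ?thesis using s1 by (simp add: cs_def)
      next
        case False
        hence "ET (last (a # take (Suc m) A)) (hd (rev (take n B)))"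
          using lastA' lastB junc by (simp add: hd_rev)
        thus ?thesis using s1 sBr unfolding cs_def
          by (metis append_Cons successively_append_iff)
      qed
      have lastcs: "last cs = hd B"
      proof (cases "n = 0")
        case True
        hence "cs = a # take (Suc m) A" by (simp add: cs_def)
        thus ?thesis using lastA' n True Bne by (simp add: hd_conv_nth)
      next
        case False
        hence "rev (take n B) \<noteq> []" using Bne by simp
        hence "last cs = last (rev (take n B))" unfolding cs_def by (metis append_Cons last_appendR)
        also have "\<dots> = hd (take n B)" by (simp add: last_rev)
        also have "\<dots> = hd B" using False Bne by simp
        finally show ?thesis .
      qed
      have "is_path VT ET cs" unfolding path_iff using dist sub succ by (simp add: cs_def)
      hence "is_cycle VT ET cs"
        unfolding is_cycle_def using len lastcs e2 S by (simp add: cs_def)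
      thus ?thesis using NC by blast
    qed
  qed
qed

lemma walk_path:
  assumes "(\<lambda>u w. u \<in> VT \<and> w \<in> VT \<and> ET u w)\<^sup>*\<^sup>* x y" "x \<in> VT"
  shows "\<exists>ps. is_path VT ET ps \<and> hd ps = x \<and> last ps = y"
  using assms(1)
proof (induction rule: rtranclp_induct)
  case base thus ?case using assms(2) by (intro exI[of _ "[x]"]) (simp add: path_iff)
next
  case (step y z)
  then obtain ps where ps: "is_path VT ET ps" "hd ps = x" "last ps = y" by blast
  show ?case
  proof (cases "z \<in> set ps")
    case True
    then obtain k where k: "k < length ps" "ps ! k = z" by (auto simp: in_set_conv_nth)
    thus ?thesis using path_seg[OF ps(1), of 0 k] ps by (auto simp: hd_conv_nth)
  next
    case False
    have "is_path VT ET (ps @ [z])" using ps step False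
      by (auto simp: path_iff successively_append_iff)
    thus ?thesis using ps by (intro exI[of _ "ps @ [z]"]) (auto simp: path_iff)
  qed
qed

definition tp :: "'b set \<Rightarrow> ('b \<Rightarrow> 'b \<Rightarrow> bool) \<Rightarrow> 'b \<Rightarrow> 'b \<Rightarrow> 'b list" where
  "tp VT ET a b = (THE ps. is_path VT ET ps \<and> hd ps = a \<and> last ps = b)"

lemma tree_sym: "is_tree VT ET \<Longrightarrow> ET x y \<Longrightarrow> ET y x"
  by (simp add: is_tree_def fin_conn_graph_def simple_graph_def)

lemma tp_eq:
  assumes T: "is_tree VT ET" and p: "is_path VT ET ps" "hd ps = a" "last ps = b"
  shows "tp VT ET a b = ps"
  unfolding tp_def
proof (rule the_equality)
  show "is_path VT ET ps \<and> hd ps = a \<and> last ps = b" using p by simp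
next
  fix qs assume "is_path VT ET qs \<and> hd qs = a \<and> last qs = b"
  thus "qs = ps" using path_uniq[of ET VT qs ps] tree_sym[OF T] T p unfolding is_tree_def by auto
qed

lemma tp_ex:
  assumes T: "is_tree VT ET" and ab: "a \<in> VT" "b \<in> VT"
  shows "is_path VT ET (tp VT ET a b) \<and> hd (tp VT ET a b) = a \<and> last (tp VT ET a b) = b"
proof -
  have "(\<lambda>u w. u \<in> VT \<and> w \<in> VT \<and> ET u w)\<^sup>*\<^sup>* a b"
    using T ab by (auto simp: is_tree_def fin_conn_graph_def connected_graph_def)
  then obtain ps where "is_path VT ET ps" "hd ps = a" "last ps = b" using walk_path[OF _ ab(1)] by blast
  thus ?thesis using tp_eq[OF T] by simp
qed

definition gg :: "'b set \<Rightarrow> ('b \<Rightarrow> 'b \<Rightarrow> bool) \<Rightarrow> 'b \<Rightarrow> 'b \<Rightarrow> 'b" where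
  "gg VT ET q x = tp VT ET q x ! 1"

lemma gg_start:
  assumes T: "is_tree VT ET" and p: "is_path VT ET ps" "hd ps = q" and x: "x \<in> set ps" "x \<noteq> q"
  shows "gg VT ET q x = ps ! 1"
proof -
  obtain j where j: "j < length ps" "ps ! j = x" using x by (auto simp: in_set_conv_nth)
  have ne: "ps \<noteq> []" using j by auto
  have p0: "ps ! 0 = q" using p(2) ne by (simp add: hd_conv_nth)
  have j0: "j > 0" using j p0 x(2) by (cases j) auto
  have sg: "is_path VT ET (take (Suc j) ps)" "hd (take (Suc j) ps) = q" "last (take (Suc j) ps) = x"
    using path_seg[OF p(1), of 0 j] j p0 by auto
  have "tp VT ET q x = take (Suc j) ps" using tp_eq[OF T sg] .
  thus ?thesis using j0 by (simp add: gg_def)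
qed

lemma gg_in:
  assumes T: "is_tree VT ET" and q: "q \<in> VT" and x: "x \<in> VT" "x \<noteq> q"
  shows "gg VT ET q x \<in> VT \<and> ET q (gg VT ET q x)"
proof -
  let ?ps = "tp VT ET q x"
  have p: "is_path VT ET ?ps" "hd ?ps = q" "last ?ps = x" using tp_ex[OF T q x(1)] by auto
  have l: "length ?ps \<ge> 2"
  proof (rule ccontr)
    assume a: "\<not> ?thesis"
    have "?ps \<noteq> []" using p by (simp add: path_iff)
    hence "0 < length ?ps" by simp
    hence "length ?ps = Suc 0" using a by linarith
    then obtain e where "?ps = [e]" by (auto simp: length_Suc_conv)
    thus False using p x by simp
  qed
  have "ET (?ps ! 0) (?ps ! Suc 0)" using successively_nth[of ET ?ps 0] p l by (auto simp: path_iff)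
  moreover have "?ps ! 0 = q" using p l by (metis hd_conv_nth path_iff)
  moreover have "?ps ! 1 \<in> VT" using p l by (auto simp: path_iff)
  ultimately show ?thesis by (simp add: gg_def)
qed

lemma gg_adj:
  assumes T: "is_tree VT ET" and q: "q \<in> VT" and x: "x \<in> VT" "x \<noteq> q" and y: "y \<in> VT" "y \<noteq> q"
    and e: "ET x y"
  shows "gg VT ET q y = gg VT ET q x"
proof -
  let ?ps = "tp VT ET q x"
  have p: "is_path VT ET ?ps" "hd ?ps = q" "last ?ps = x" using tp_ex[OF T q x(1)] by auto
  have "x \<in> set ?ps" using p by (metis last_in_set path_iff)
  hence gx: "gg VT ET q x = ?ps ! 1" using gg_start[OF T p(1,2), of x] x by auto
  show ?thesis
  proof (cases "y \<in> set ?ps")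
    case True thus ?thesis using gg_start[OF T p(1,2) True y(2)] gx by simp
  next
    case False
    have l: "length ?ps \<ge> 2"
    proof (rule ccontr)
      assume a: "\<not> ?thesis"
      have "?ps \<noteq> []" using p by (simp add: path_iff)
      hence "0 < length ?ps" by simp
      hence "length ?ps = Suc 0" using a by linarith
      then obtain e where "?ps = [e]" by (auto simp: length_Suc_conv)
      thus False using p x by simp
    qed
    have pp: "is_path VT ET (?ps @ [y])" using p y e False
      by (auto simp: path_iff successively_append_iff)
    have hd1: "hd (?ps @ [y]) = q" using p by (simp add: path_iff)
    have "gg VT ET q y = (?ps @ [y]) ! 1" using gg_start[OF T pp hd1 _ y(2)] by simp
    also have "\<dots> = ?ps ! 1" using l by (simp add: nth_append)
    finally show ?thesis using gx by simp
  qed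
qed

lemma gg_const:
  assumes T: "is_tree VT ET" and q: "q \<in> VT" and p: "is_path VT ET ps" and nq: "q \<notin> set ps"
  shows "i < length ps \<Longrightarrow> gg VT ET q (ps ! i) = gg VT ET q (ps ! 0)"
proof (induction i)
  case 0 thus ?case by simp
next
  case (Suc i)
  have il: "i < length ps" using Suc.prems by simp
  have e: "ET (ps ! i) (ps ! Suc i)" using p Suc.prems by (auto simp: is_path_def)
  have m1: "ps ! i \<in> set ps" "ps ! Suc i \<in> set ps" using Suc.prems il by (simp_all add: nth_mem)
  have sv: "set ps \<subseteq> VT" using p by (simp add: path_iff)
  have "gg VT ET q (ps ! Suc i) = gg VT ET q (ps ! i)"
    by (rule gg_adj[OF T q]) (use m1 sv nq e in auto)
  thus ?case using Suc.IH[OF il] by simp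
qed

lemma half:
  assumes T: "is_tree VT ET" and p: "is_path VT ET ps" "hd ps = q"
    and pw: "is_path VT ET pw" and k: "k < length ps" "ps ! k \<in> set pw"
    and kmin: "\<And>l. l < k \<Longrightarrow> ps ! l \<notin> set pw" and jk: "j \<le> k"
    and b1: "is_path VT ET b1" "q \<in> set b1" "z \<in> set b1" "z \<in> set pw"
  shows "ps ! j \<in> set b1"
proof -
  have S: "\<And>x y. ET x y \<Longrightarrow> ET y x" using tree_sym[OF T] .
  define seg where "seg = take (Suc k) ps"
  have sg: "is_path VT ET seg" "hd seg = q" "last seg = ps ! k"
    using path_seg[OF p(1), of 0 k] k p unfolding seg_def by (auto simp: hd_conv_nth)
  obtain r where r: "is_path VT ET r" "hd r = ps ! k" "last r = z" "set r \<subseteq> set pw"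
    using sub_path[OF S pw k(2) b1(4)] by blast
  obtain s where s: "is_path VT ET s" "hd s = q" "last s = z" "set s \<subseteq> set b1"
    using sub_path[OF S b1(1,2,3)] by blast
  obtain r' where r': "r = ps ! k # r'" using r by (cases r) (auto simp: path_iff)
  have dr: "distinct r" "successively ET r" "set r \<subseteq> VT" using r by (auto simp: path_iff)
  have disj: "set seg \<inter> set r' = {}"
  proof (rule ccontr)
    assume "\<not> ?thesis"
    then obtain x where x1: "x \<in> set seg" "x \<in> set r'" by blast
    obtain l where l: "l < Suc k" "l < length ps" "ps ! l = x" using x1(1)
      by (auto simp: seg_def in_set_conv_nth)
    have "x \<in> set pw" using x1(2) r' r(4) by auto
    hence "l = k" using kmin l by (metis less_Suc_eq)
    thus False using l x1 r' dr(1) by simp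
  qed
  have pp: "is_path VT ET (seg @ r')"
  proof -
    have "successively ET r'" using dr(2) r' by (cases "r' = []") (auto simp: successively_Cons)
    moreover have "r' \<noteq> [] \<Longrightarrow> ET (last seg) (hd r')" using dr(2) r' sg(3)
      by (simp add: successively_Cons)
    ultimately show ?thesis using sg(1) dr disj r'
      by (auto simp: path_iff successively_append_iff)
  qed
  have "last (seg @ r') = z"
  proof (cases "r' = []")
    case True thus ?thesis using sg r r' by simp
  next
    case False thus ?thesis using r r' by simp
  qed
  hence "seg @ r' = s" using path_uniq[of ET VT "seg @ r'" s] S T pp s sg
    unfolding is_tree_def by (auto simp: path_iff)
  moreover have "ps ! j \<in> set seg" using jk k by (simp add: seg_def in_set_conv_nth) (metis le_imp_less_Suc nth_take)
  ultimately show ?thesis using s(4) by auto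
qed

lemma same_side:
  assumes T: "is_tree VT ET" and p: "is_path VT ET ps" "hd ps = q"
    and pv: "is_path VT ET pv" and pw: "is_path VT ET pw" and dvw: "set pv \<inter> set pw = {}"
    and x: "x \<in> set ps" "x \<in> set pv" and y: "y \<in> set ps" "y \<in> set pw"
    and a1: "is_path VT ET a1" "q \<in> set a1" "set a1 \<inter> set pv \<noteq> {}" "set a1 \<inter> set pw = {}"
    and b1: "is_path VT ET b1" "q \<in> set b1" "set b1 \<inter> set pw \<noteq> {}" "set b1 \<inter> set pv = {}"
  shows False
proof -
  define jv where "jv = (LEAST j. j < length ps \<and> ps ! j \<in> set pv)"
  define kw where "kw = (LEAST j. j < length ps \<and> ps ! j \<in> set pw)"
  obtain j0 where j0: "j0 < length ps \<and> ps ! j0 \<in> set pv" using x by (auto simp: in_set_conv_nth)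
  obtain k0 where k0: "k0 < length ps \<and> ps ! k0 \<in> set pw" using y by (auto simp: in_set_conv_nth)
  have jv: "jv < length ps" "ps ! jv \<in> set pv" using LeastI[of "\<lambda>j. j < length ps \<and> ps ! j \<in> set pv", OF j0]
    unfolding jv_def by auto
  have kw: "kw < length ps" "ps ! kw \<in> set pw" using LeastI[of "\<lambda>j. j < length ps \<and> ps ! j \<in> set pw", OF k0]
    unfolding kw_def by auto
  have jmin: "\<And>l. l < jv \<Longrightarrow> ps ! l \<notin> set pv"
    using not_less_Least jv_def jv(1) by fastforce
  have kmin: "\<And>l. l < kw \<Longrightarrow> ps ! l \<notin> set pw"
    using not_less_Least kw_def kw(1) by fastforce
  have "jv \<noteq> kw" using jv kw dvw by auto
  show False
  proof (cases "jv < kw")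
    case True
    obtain z where z: "z \<in> set b1" "z \<in> set pw" using b1 by auto
    have "ps ! jv \<in> set b1" using half[OF T p pw kw kmin _ b1(1,2) z] True by simp
    thus False using jv b1(4) by auto
  next
    case False
    obtain z where z: "z \<in> set a1" "z \<in> set pv" using a1 by auto
    have "ps ! kw \<in> set a1" using half[OF T p pv jv jmin _ a1(1,2) z] False by simp
    thus False using kw a1(4) by auto
  qed
qed

lemma path_drop: "is_path VT ET ps \<Longrightarrow> n < length ps \<Longrightarrow> is_path VT ET (drop n ps)"
  unfolding path_iff using set_drop_subset[of n ps] by (auto intro: succ_drop)

lemma path_len2: "is_path VT ET ps \<Longrightarrow> u \<in> set ps \<Longrightarrow> u \<noteq> hd ps \<Longrightarrow> length ps \<ge> 2"
  by (cases ps; cases "tl ps") (auto simp: path_iff)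

lemma opp:
  assumes T: "is_tree VT ET" and p: "is_path VT ET ps" and i: "i < length ps" "ps ! i = q"
    and u: "u \<in> set (drop i ps)" "u \<noteq> q" and w: "w \<in> set (take (Suc i) ps)" "w \<noteq> q"
  shows "gg VT ET q u \<noteq> gg VT ET q w"
proof -
  have S: "\<And>x y. ET x y \<Longrightarrow> ET y x" using tree_sym[OF T] .
  let ?R = "drop i ps"
  have R: "is_path VT ET ?R" "hd ?R = q" using path_drop[OF p i(1)] i by (auto simp: hd_drop_conv_nth)
  have lR: "length ?R \<ge> 2" using path_len2[OF R(1) u(1)] R u by auto
  have gu: "gg VT ET q u = ps ! Suc i" using gg_start[OF T R u] lR by simp
  let ?t = "take (Suc i) ps"
  have t: "is_path VT ET ?t" "last ?t = q" using path_seg[OF p, of 0 i] i by auto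
  let ?L = "rev ?t"
  have L: "is_path VT ET ?L" "hd ?L = q" using path_rev[OF S t(1)] t(2) by (auto simp: hd_rev)
  have wL: "w \<in> set ?L" using w by simp
  have lL: "length ?L \<ge> 2" using path_len2[OF L(1) wL] L w by auto
  hence i1: "i \<ge> 1" using i by simp
  have "gg VT ET q w = ?L ! 1" using gg_start[OF T L wL w(2)] .
  also have "\<dots> = ps ! (i - 1)" using i i1 by (simp add: rev_nth)
  finally have gw: "gg VT ET q w = ps ! (i - 1)" .
  have "distinct ps" using p by (simp add: path_iff)
  moreover have "Suc i < length ps" using lR by simp
  ultimately have "ps ! Suc i \<noteq> ps ! (i - 1)" using i by (simp add: nth_eq_iff_index_eq)
  thus ?thesis using gu gw by simp
qed

theorem mainTheorem2:
  fixes V :: "'a set" and E :: "'a \<Rightarrow> 'a \<Rightarrow> bool"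
    and VT :: "'b set" and ET :: "'b \<Rightarrow> 'b \<Rightarrow> bool"
    and P :: "'a \<Rightarrow> 'b list" and C :: "'a set" and q :: 'b and h :: nat
  assumes "fin_conn_graph V E"
    and "VPT_rep V E P VT ET"
    and "is_clique V E C"
    and "q \<in> VT"
    and "C = Cq V P q"
    and "degree VT ET q = h"
  shows "k_colorable (branch_vertices V E C) (branch_edge V E C) h"
proof -
  have T: "is_tree VT ET" using assms(2) by (simp add: VPT_rep_def)
  have S: "\<And>x y. ET x y \<Longrightarrow> ET y x" using tree_sym[OF T] .
  have SE: "\<And>x y. E x y \<Longrightarrow> E y x" using assms(1) by (simp add: fin_conn_graph_def simple_graph_def)
  have EV: "\<And>x y. E x y \<Longrightarrow> x \<in> V \<and> y \<in> V" using assms(1) by (simp add: fin_conn_graph_def simple_graph_def)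
  have PV: "\<And>v. v \<in> V \<Longrightarrow> is_path VT ET (P v)" using assms(2) by (simp add: VPT_rep_def)
  have adj: "\<And>v v'. v \<in> V \<Longrightarrow> v' \<in> V \<Longrightarrow> v \<noteq> v' \<Longrightarrow> E v v' \<longleftrightarrow> set (P v) \<inter> set (P v') \<noteq> {}"
    using assms(2) by (simp add: VPT_rep_def)
  have Cdef: "\<And>c. c \<in> C \<longleftrightarrow> c \<in> V \<and> q \<in> set (P c)" using assms(5) by (simp add: Cq_def)
  have q: "q \<in> VT" by fact
  define N where "N = {r \<in> VT. ET q r}"
  have fN: "finite N" using T unfolding N_def is_tree_def fin_conn_graph_def by simp
  have cN: "card N = h" using assms(6) by (simp add: degree_def N_def)
  obtain idx where idx: "bij_betw idx N {0..<h}" using ex_bij_betw_finite_nat[OF fN] cN by metis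
  define BV where "BV = branch_vertices V E C"
  define col where "col v = idx (gg VT ET q (hd (P v)))" for v
  have BVp: "v \<in> V \<and> v \<notin> C \<and> q \<notin> set (P v)" if "v \<in> BV" for v
    using that Cdef by (auto simp: BV_def branch_vertices_def)
  have hdP: "hd (P v) \<in> set (P v)" if "v \<in> V" for v
    using PV[OF that] by (simp add: path_iff)
  have gN: "gg VT ET q (hd (P v)) \<in> N" if "v \<in> BV" for v
  proof -
    have "hd (P v) \<in> VT" "hd (P v) \<noteq> q" using BVp[OF that] hdP PV unfolding path_iff by blast+
    thus ?thesis using gg_in[OF T q] by (simp add: N_def)
  qed
  have gall: "gg VT ET q x = gg VT ET q (hd (P v))" if vb: "v \<in> BV" and xs: "x \<in> set (P v)" for v x
  proof -
    have pv: "is_path VT ET (P v)" using PV BVp[OF vb] by blast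
    obtain j where j: "j < length (P v)" "P v ! j = x" using xs by (auto simp: in_set_conv_nth)
    have "P v \<noteq> []" using pv by (simp add: path_iff)
    hence "hd (P v) = P v ! 0" by (simp add: hd_conv_nth)
    thus ?thesis using gg_const[OF T q pv _ j(1)] BVp[OF vb] j(2) by simp
  qed
  have edge: "col v \<noteq> col w" if be: "branch_edge V E C v w" for v w
  proof
    assume eq: "col v = col w"
    have vB: "v \<in> BV" and wB: "w \<in> BV" using be by (auto simp: branch_edge_def BV_def)
    have geq: "gg VT ET q (hd (P v)) = gg VT ET q (hd (P w))"
      using eq gN[OF vB] gN[OF wB] idx unfolding col_def bij_betw_def inj_on_def by blast
    obtain c where c: "c \<in> C" "E c v" "E c w" using be by (auto simp: branch_edge_def)
    obtain v' w' where vw': "v' \<in> C" "w' \<in> C" "E v' v" "\<not> E v' w" "E w' w" "\<not> E w' v"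
      using be by (auto simp: branch_edge_def)
    have nvw: "\<not> E v w" using be by (simp add: branch_edge_def)
    have v: "v \<in> V" "v \<notin> C" "q \<notin> set (P v)" using BVp[OF vB] by auto
    have w: "w \<in> V" "w \<notin> C" "q \<notin> set (P w)" using BVp[OF wB] by auto
    have cV: "c \<in> V" "q \<in> set (P c)" using Cdef c(1) by auto
    have v'V: "v' \<in> V" "q \<in> set (P v')" using Cdef vw'(1) by auto
    have w'V: "w' \<in> V" "q \<in> set (P w')" using Cdef vw'(2) by auto
    have "v \<noteq> w" using vw' by auto
    hence dvw: "set (P v) \<inter> set (P w) = {}" using adj[OF v(1) w(1)] nvw by blast
    have cv: "set (P c) \<inter> set (P v) \<noteq> {}" using adj[OF cV(1) v(1)] c v by blast
    have cw: "set (P c) \<inter> set (P w) \<noteq> {}" using adj[OF cV(1) w(1)] c w by blast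
    have a1: "set (P v') \<inter> set (P v) \<noteq> {}" using adj[OF v'V(1) v(1)] vw' v by blast
    have a2: "set (P v') \<inter> set (P w) = {}" using adj[OF v'V(1) w(1)] vw' w by blast
    have b1: "set (P w') \<inter> set (P w) \<noteq> {}" using adj[OF w'V(1) w(1)] vw' w by blast
    have b2: "set (P w') \<inter> set (P v) = {}" using adj[OF w'V(1) v(1)] vw' v by blast
    let ?ps = "P c"
    have p: "is_path VT ET ?ps" using PV cV by blast
    obtain i where i: "i < length ?ps" "?ps ! i = q" using cV(2) by (auto simp: in_set_conv_nth)
    obtain x where x: "x \<in> set ?ps" "x \<in> set (P v)" using cv by blast
    obtain y where y: "y \<in> set ?ps" "y \<in> set (P w)" using cw by blast
    let ?R = "drop i ?ps" and ?L = "rev (take (Suc i) ?ps)"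
    have R: "is_path VT ET ?R" "hd ?R = q" using path_drop[OF p i(1)] i by (auto simp: hd_drop_conv_nth)
    have t: "is_path VT ET (take (Suc i) ?ps)" "last (take (Suc i) ?ps) = q" using path_seg[OF p, of 0 i] i by auto
    have L: "is_path VT ET ?L" "hd ?L = q" using path_rev[OF S t(1)] t(2) by (auto simp: hd_rev)
    have split: "z \<in> set ?R \<or> z \<in> set (take (Suc i) ?ps)" if "z \<in> set ?ps" for z
      using that by (metis append_take_drop_id take_Suc_conv_app_nth[OF i(1)] Un_iff set_append
          i(1) Cons_nth_drop_Suc list.set_intros(1) i(2))
    have xq: "x \<noteq> q" using x v by auto
    have yq: "y \<noteq> q" using y w by auto
    have gxy: "gg VT ET q x = gg VT ET q y" using gall[OF vB x(2)] gall[OF wB y(2)] geq by simp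
    have pv: "is_path VT ET (P v)" and pw: "is_path VT ET (P w)" and pv': "is_path VT ET (P v')"
      and pw': "is_path VT ET (P w')" using PV v w v'V w'V by auto
    show False
    proof (cases "x \<in> set ?R")
      case xR: True
      show False
      proof (cases "y \<in> set ?R")
        case True
        show False by (rule same_side[OF T R pv pw dvw xR x(2) True y(2) pv' v'V(2) a1 a2 pw' w'V(2) b1 b2])
      next
        case False
        hence "y \<in> set (take (Suc i) ?ps)" using split y(1) by blast
        thus False using opp[OF T p i xR xq _ yq] gxy by simp
      qed
    next
      case xL0: False
      hence xt: "x \<in> set (take (Suc i) ?ps)" using split x(1) by blast
      hence xL: "x \<in> set ?L" by simp
      show False
      proof (cases "y \<in> set ?R")
        case True
        thus False using opp[OF T p i True yq xt xq] gxy by simp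
      next
        case False
        hence "y \<in> set ?L" using split y(1) by auto
        show False by (rule same_side[OF T L pv pw dvw xL x(2) \<open>y \<in> set ?L\<close> y(2) pv' v'V(2) a1 a2 pw' w'V(2) b1 b2])
      qed
    qed
  qed
  have "\<forall>v\<in>BV. col v < h" using gN idx unfolding col_def bij_betw_def by auto
  moreover have "\<forall>v\<in>BV. \<forall>w\<in>BV. branch_edge V E C v w \<longrightarrow> col v \<noteq> col w" using edge by blast
  ultimately show ?thesis unfolding k_colorable_def BV_def by blast
qed

end
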